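(* Let $A$ be a finite alphabet. If $u_1$ is $\ell_1$-rich and $u_2$ is $\ell_2$-rich, then for all $v,v'\in A^*$, $v\sim_n v'$ implies $u_1vu_2\sim_{\ell_1+n+\ell_2}u_1v'u_2$.
   Context: A word $u\in A^*$ is rich if every letter of $A$ occurs in it. For $\ell\in\mathbb{N}$, $u$ is $\ell$-rich if it can be written $u=u_1\cdots u_\ell u'$ where $u_1,\ldots,u_\ell$ are rich. $u\sim_n v$ iff $u$ and $v$ have exactly the same (scattered) subwords of length at most $n$. *)

theory Defs
  imports Main "HOL-Library.Sublist"
begin

(* The alphabet A is the (finite) type 'a, i.e. A = UNIV. Words are lists. *)

definition rich :: "'a list \<Rightarrow> bool" where
  "rich u \<longleftrightarrow> (\<forall>a::'a. a \<in> set u)"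

definition lrich :: "nat \<Rightarrow> 'a list \<Rightarrow> bool" where
  "lrich l u \<longleftrightarrow> (\<exists>us u'. length us = l \<and> (\<forall>x\<in>set us. rich x) \<and> u = concat us @ u')"

definition simon_eq :: "nat \<Rightarrow> 'a list \<Rightarrow> 'a list \<Rightarrow> bool" where
  "simon_eq n u v \<longleftrightarrow> (\<forall>w. length w \<le> n \<longrightarrow> (subseq w u \<longleftrightarrow> subseq w v))"

end

theory Submission
  imports Defs
begin

lemma concat_rich_emb:
  assumes "\<forall>x\<in>set us. rich x" "length w \<le> length us"
  shows "subseq w (concat us)"
  using assms
proof (induction us arbitrary: w)
  case Nil then show ?case by simp
next
  case (Cons r rs)
  show ?case
  proof (cases w)
    case Nil then show ?thesis by simp
  next
    case (Cons a w')
    have "a \<in> set r" using Cons.prems unfolding rich_def by auto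
    hence "subseq [a] r" by (simp add: subseq_singleton_left)
    moreover have "subseq w' (concat rs)" using Cons.IH Cons.prems \<open>w = a # w'\<close> by auto
    ultimately have "subseq ([a] @ w') (r @ concat rs)" by (rule list_emb_append_mono)
    then show ?thesis using \<open>w = a # w'\<close> by simp
  qed
qed

lemma lrich_emb:
  assumes "lrich l p" "length w \<le> l"
  shows "subseq w p"
proof -
  obtain us u' where "length us = l" "\<forall>x\<in>set us. rich x" "p = concat us @ u'"
    using assms(1) unfolding lrich_def by blast
  then show ?thesis using concat_rich_emb[of us w] assms(2) by (simp add: subseq_rev_drop_many)
qed

lemma left_dir:
  assumes "lrich l p" "simon_eq k x y" "length w \<le> l + k" "subseq w (p @ x)"
  shows "subseq w (p @ y)"
proof -
  obtain w1 w2 where w: "w = w1 @ w2" "subseq w1 p" "subseq w2 x"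
    using assms(4) by (auto elim: subseq_appendE)
  show ?thesis
  proof (cases "length w1 \<ge> l")
    case True
    hence "length w2 \<le> k" using assms(3) w(1) by simp
    hence "subseq w2 y" using assms(2) w(3) unfolding simon_eq_def by blast
    then show ?thesis using w by (simp add: list_emb_append_mono)
  next
    case False
    have t: "subseq (take l w) p" by (rule lrich_emb[OF assms(1)]) simp
    have "drop l w = drop (l - length w1) w2" using False w(1) by simp
    hence "suffix (drop l w) w2" by (simp add: suffix_drop)
    hence "subseq (drop l w) w2" by blast
    hence "subseq (drop l w) x" using w(3) by (rule subseq_order.order_trans)
    moreover have "length (drop l w) \<le> k" using assms(3) by simp
    ultimately have "subseq (drop l w) y" using assms(2) unfolding simon_eq_def by blast
    hence "subseq (take l w @ drop l w) (p @ y)" using t by (rule list_emb_append_mono[OF _ _, rotated])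
    then show ?thesis by simp
  qed
qed

lemma right_dir:
  assumes "lrich l s" "simon_eq k x y" "length w \<le> k + l" "subseq w (x @ s)"
  shows "subseq w (y @ s)"
proof -
  obtain w1 w2 where w: "w = w1 @ w2" "subseq w1 x" "subseq w2 s"
    using assms(4) by (auto elim: subseq_appendE)
  show ?thesis
  proof (cases "length w1 \<le> k")
    case True
    hence "subseq w1 y" using assms(2) w(2) unfolding simon_eq_def by blast
    then show ?thesis using w by (simp add: list_emb_append_mono)
  next
    case False
    define m where "m = length w - l"
    have "m \<le> length w1" using False assms(3) w(1) unfolding m_def by simp
    hence "take m w = take m w1" using w(1) by simp
    hence "prefix (take m w) w1" by (simp add: take_is_prefix)
    hence "subseq (take m w) w1" by blast
    hence "subseq (take m w) x" using w(2) by (rule subseq_order.order_trans)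
    moreover have "length (take m w) \<le> k" using assms(3) unfolding m_def by simp
    ultimately have a: "subseq (take m w) y" using assms(2) unfolding simon_eq_def by blast
    have b: "subseq (drop m w) s" by (rule lrich_emb[OF assms(1)]) (simp add: m_def)
    have "subseq (take m w @ drop m w) (y @ s)" using a b by (rule list_emb_append_mono)
    then show ?thesis by simp
  qed
qed

lemma simon_sym: "simon_eq n x y \<Longrightarrow> simon_eq n y x"
  unfolding simon_eq_def by blast

lemma left_lemma:
  assumes "lrich l p" "simon_eq k x y"
  shows "simon_eq (l + k) (p @ x) (p @ y)"
  unfolding simon_eq_def
  using left_dir[OF assms] left_dir[OF assms(1) simon_sym[OF assms(2)]] by blast

lemma right_lemma:
  assumes "lrich l s" "simon_eq k x y"
  shows "simon_eq (k + l) (x @ s) (y @ s)"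
  unfolding simon_eq_def
  using right_dir[OF assms] right_dir[OF assms(1) simon_sym[OF assms(2)]] by blast

theorem lemma4:
  fixes u1 u2 v v' :: "'a::finite list"
  assumes "lrich l1 u1" and "lrich l2 u2" and "simon_eq n v v'"
  shows "simon_eq (l1 + n + l2) (u1 @ v @ u2) (u1 @ v' @ u2)"
proof -
  have "simon_eq (n + l2) (v @ u2) (v' @ u2)" by (rule right_lemma[OF assms(2,3)])
  from left_lemma[OF assms(1) this] show ?thesis by (simp add: add.assoc)
qed

end
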